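(* Let $\mathscr{C}=\{(\boldsymbol{u}(i),\mathcal{D}_i)\}_{i=1}^M$ be a code from the family $\mathsf{C}(C,\boldsymbol{A},\boldsymbol{L},\boldsymbol{\alpha},\boldsymbol{p},\boldsymbol{r})$ described below. Then $\mathscr{C}$ is an $(n,M,\mathcal{X},\epsilon,B,\delta)$-code for the complex AWGN channel with noise variance $\sigma^2$ if the following inequalities are simultaneously satisfied: \[ \epsilon\ge 1-\frac1M\sum_{i=1}^M\prod_{c=1}^C\left(1-\exp\!\left(-\frac{r_c^2}{\sigma^2}\right)\right)^{n\sum_{\ell=1}^{L_c}P_{\boldsymbol{u}(i)}(x_c^{(\ell)})}, \] \[ R(\mathscr{C})\le\log_2\left(\sum_{c=1}^C\left\lfloor\frac{\pi}{2\arcsin\frac{r_c}{2A_c}}\right\rfloor\right), \] \[ \delta\ge\frac1M\sum_{i=1}^M\mathbb{1}_{\left\{\sum_{c=1}^C\sum_{\ell=1}^{L_c}P_{\boldsymbol{u}(i)}(x_c^{(\ell)})(k_1A_c^2+k_2A_c^4)<\frac{B}{n}\right\}}, \] \[ B\le\bar e_{j^{+}}, \] where $\bar e_1<\dots<\bar e_{M'}$ are the distinct values among $e_1,\dots,e_M$ and $j^{+}=\min\{j\in\{1,\dots,M'\}:\ \delta\le\frac1M\sum_{k=1}^j\sum_{i=1}^M\mathbb{1}_{\{e_i=\bar e_k\}}\}$.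
   Context: Channel: $f_{\boldsymbol{Y}|\boldsymbol{X}}(\boldsymbol{y}|\boldsymbol{\nu})=\prod_{m=1}^n \frac{1}{\pi\sigma^2}\exp(-|y_m-\nu_m|^2/\sigma^2)$. An $(n,M,\mathcal{X})$-code is $\{(\boldsymbol{u}(i),\mathcal{D}_i)\}_{i=1}^M$ with $\boldsymbol{u}(i)\in\mathcal{X}^n$ and pairwise disjoint $\mathcal{D}_i\subseteq\mathbb{C}^n$; $R(\mathscr{C})=\frac{\log_2M}{n}$; $\gamma(\mathscr{C})=\frac1M\sum_i\big(1-\int_{\mathcal{D}_i}f_{\boldsymbol{Y}|\boldsymbol{X}}(\boldsymbol{y}|\boldsymbol{u}(i))\mathrm{d}\boldsymbol{y}\big)$; $e_i=k_1\sum_m|u_m(i)|^2+k_2\sum_m|u_m(i)|^4$ with positive constants $k_1,k_2$; $\theta(\mathscr{C},B)=\frac1M\sum_i\mathbb{1}_{\{e_i<B\}}$; an $(n,M,\mathcal{X},\epsilon,B,\delta)$-code is one with $\gamma(\mathscr{C})\le\epsilon$, $\theta(\mathscr{C},B)\le\delta$. Types: $P_{\boldsymbol{u}(i)}(x)=\frac1n\sum_m\mathbb{1}_{\{u_m(i)=x\}}$, $P_{\mathscr{C}}=\frac1M\sum_iP_{\boldsymbol{u}(i)}$. Family $\mathsf{C}(C,\boldsymbol{A},\boldsymbol{L},\boldsymbol{\alpha},\boldsymbol{p},\boldsymbol{r})$: $C\in\mathbb{N}$ layers; amplitudes $A_1>A_2>\dots>A_C>0$; $L_c\in\mathbb{N}$;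 phases $\alpha_c\in[0,2\pi]$; layer $c$ is $\mathcal{U}(A_c,L_c,\alpha_c)=\{x_c^{(1)},\dots,x_c^{(L_c)}\}=\{A_c\exp(\mathrm{i}(2\pi\ell/L_c+\alpha_c)):\ell=0,\dots,L_c-1\}$, and $\mathcal{X}=\bigcup_{c=1}^C\mathcal{U}(A_c,L_c,\alpha_c)$. The codewords are pairwise distinct elements of $\mathcal{X}^n$ with $P_{\mathscr{C}}(x_c^{(\ell)})=p_c/L_c$ for all $c,\ell$, where $\boldsymbol{p}=(p_1,\dots,p_C)$ is a probability vector. With radii $r_c>0$, let $\mathcal{G}_c^{(\ell)}=\{y\in\mathbb{C}:|y-x_c^{(\ell)}|\le r_c\}$; the decoding set of $\boldsymbol{u}(i)$ is $\mathcal{D}_i=\mathcal{D}_{i,1}\times\dots\times\mathcal{D}_{i,n}$ with $\mathcal{D}_{i,m}=\mathcal{G}_c^{(\ell)}$ where $u_m(i)=x_c^{(\ell)}$; and $A_c-A_{c+1}\ge r_c+r_{c+1}$ for $c=1,\dots,C-1$. *)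

theory Defs
  imports "HOL-Analysis.Analysis"
begin

text \<open>Conventions: layers are indexed by c in {1..C}; the points of layer c are
  indexed by l in {0..<L c}; codewords are indexed by i in {1..M}; the block length
  is n = CARD('n), codeword symbols are indexed by the finite type 'n.\<close>

definition xpt :: "(nat \<Rightarrow> real) \<Rightarrow> (nat \<Rightarrow> nat) \<Rightarrow> (nat \<Rightarrow> real) \<Rightarrow> nat \<Rightarrow> nat \<Rightarrow> complex" where
  "xpt A L \<alpha> c l = complex_of_real (A c) *
      exp (\<i> * complex_of_real (2 * pi * real l / real (L c) + \<alpha> c))"

definition ulayer :: "(nat \<Rightarrow> real) \<Rightarrow> (nat \<Rightarrow> nat) \<Rightarrow> (nat \<Rightarrow> real) \<Rightarrow> nat \<Rightarrow> complex set" where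
  "ulayer A L \<alpha> c = {xpt A L \<alpha> c l | l. l < L c}"

definition constellation :: "nat \<Rightarrow> (nat \<Rightarrow> real) \<Rightarrow> (nat \<Rightarrow> nat) \<Rightarrow> (nat \<Rightarrow> real) \<Rightarrow> complex set" where
  "constellation C A L \<alpha> = (\<Union>c\<in>{1..C}. ulayer A L \<alpha> c)"

definition type_of_word :: "complex ^ 'n::finite \<Rightarrow> complex \<Rightarrow> real" where
  "type_of_word v x = real (card {m. v $ m = x}) / real CARD('n)"

definition type_of_code :: "nat \<Rightarrow> (nat \<Rightarrow> complex ^ 'n::finite) \<Rightarrow> complex \<Rightarrow> real" where
  "type_of_code M u x = (1 / real M) * (\<Sum>i\<in>{1..M}. type_of_word (u i) x)"

definition awgn_density :: "real \<Rightarrow> complex ^ 'n::finite \<Rightarrow> complex ^ 'n \<Rightarrow> real" where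
  "awgn_density \<sigma> y \<nu> =
     (\<Prod>m\<in>UNIV. 1 / (pi * \<sigma>\<^sup>2) * exp (- (cmod (y $ m - \<nu> $ m))\<^sup>2 / \<sigma>\<^sup>2))"

definition code_rate :: "nat \<Rightarrow> real" where
  "code_rate M = log 2 (real M) / real CARD('n::finite)"

definition avg_error :: "real \<Rightarrow> nat \<Rightarrow> (nat \<Rightarrow> complex ^ 'n::finite) \<Rightarrow> (nat \<Rightarrow> (complex ^ 'n) set) \<Rightarrow> real" where
  "avg_error \<sigma> M u D = (1 / real M) *
     (\<Sum>i\<in>{1..M}. 1 - set_lebesgue_integral lborel (D i) (\<lambda>y. awgn_density \<sigma> y (u i)))"

definition energy :: "real \<Rightarrow> real \<Rightarrow> complex ^ 'n::finite \<Rightarrow> real" where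
  "energy k1 k2 v = k1 * (\<Sum>m\<in>UNIV. (cmod (v $ m))\<^sup>2) + k2 * (\<Sum>m\<in>UNIV. (cmod (v $ m)) ^ 4)"

definition energy_outage :: "real \<Rightarrow> real \<Rightarrow> nat \<Rightarrow> (nat \<Rightarrow> complex ^ 'n::finite) \<Rightarrow> real \<Rightarrow> real" where
  "energy_outage k1 k2 M u B = (1 / real M) * real (card {i\<in>{1..M}. energy k1 k2 (u i) < B})"

definition is_code :: "complex set \<Rightarrow> nat \<Rightarrow> (nat \<Rightarrow> complex ^ 'n::finite) \<Rightarrow> (nat \<Rightarrow> (complex ^ 'n) set) \<Rightarrow> bool" where
  "is_code X M u D \<longleftrightarrow>
     (\<forall>i\<in>{1..M}. \<forall>m. u i $ m \<in> X) \<and>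
     (\<forall>i\<in>{1..M}. \<forall>j\<in>{1..M}. i \<noteq> j \<longrightarrow> D i \<inter> D j = {})"

definition is_code_eBd :: "real \<Rightarrow> real \<Rightarrow> real \<Rightarrow> complex set \<Rightarrow> nat \<Rightarrow> (nat \<Rightarrow> complex ^ 'n::finite)
     \<Rightarrow> (nat \<Rightarrow> (complex ^ 'n) set) \<Rightarrow> real \<Rightarrow> real \<Rightarrow> real \<Rightarrow> bool" where
  "is_code_eBd \<sigma> k1 k2 X M u D \<epsilon> B \<delta> \<longleftrightarrow>
     is_code X M u D \<and> avg_error \<sigma> M u D \<le> \<epsilon> \<and> energy_outage k1 k2 M u B \<le> \<delta>"

definition decoding_set :: "nat \<Rightarrow> (nat \<Rightarrow> real) \<Rightarrow> (nat \<Rightarrow> nat) \<Rightarrow> (nat \<Rightarrow> real) \<Rightarrow> (nat \<Rightarrow> real)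
     \<Rightarrow> complex ^ 'n::finite \<Rightarrow> (complex ^ 'n) set" where
  "decoding_set C A L \<alpha> r v =
     {y. \<forall>m. \<forall>c\<in>{1..C}. \<forall>l<L c. v $ m = xpt A L \<alpha> c l \<longrightarrow> cmod (y $ m - xpt A L \<alpha> c l) \<le> r c}"

definition in_family :: "nat \<Rightarrow> (nat \<Rightarrow> real) \<Rightarrow> (nat \<Rightarrow> nat) \<Rightarrow> (nat \<Rightarrow> real) \<Rightarrow> (nat \<Rightarrow> real)
     \<Rightarrow> (nat \<Rightarrow> real) \<Rightarrow> nat \<Rightarrow> (nat \<Rightarrow> complex ^ 'n::finite) \<Rightarrow> (nat \<Rightarrow> (complex ^ 'n) set) \<Rightarrow> bool" where
  "in_family C A L \<alpha> p r M u D \<longleftrightarrow>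
     1 \<le> C \<and>
     (\<forall>c\<in>{1..C}. 1 \<le> L c \<and> 0 < A c \<and> 0 \<le> \<alpha> c \<and> \<alpha> c \<le> 2 * pi \<and> 0 < r c \<and> 0 \<le> p c) \<and>
     (\<forall>c\<in>{1..<C}. A (c + 1) < A c \<and> r c + r (c + 1) \<le> A c - A (c + 1)) \<and>
     sum p {1..C} = 1 \<and>
     (\<forall>i\<in>{1..M}. \<forall>m. u i $ m \<in> constellation C A L \<alpha>) \<and>
     inj_on u {1..M} \<and>
     (\<forall>c\<in>{1..C}. \<forall>l<L c. type_of_code M u (xpt A L \<alpha> c l) = p c / real (L c)) \<and>
     (\<forall>i\<in>{1..M}. D i = decoding_set C A L \<alpha> r (u i))"

definition energy_values :: "real \<Rightarrow> real \<Rightarrow> nat \<Rightarrow> (nat \<Rightarrow> complex ^ 'n::finite) \<Rightarrow> real set" where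
  "energy_values k1 k2 M u = (\<lambda>i. energy k1 k2 (u i)) ` {1..M}"

definition ebar :: "real \<Rightarrow> real \<Rightarrow> nat \<Rightarrow> (nat \<Rightarrow> complex ^ 'n::finite) \<Rightarrow> nat \<Rightarrow> real" where
  "ebar k1 k2 M u k = sorted_list_of_set (energy_values k1 k2 M u) ! (k - 1)"

definition jplus_set :: "real \<Rightarrow> real \<Rightarrow> nat \<Rightarrow> (nat \<Rightarrow> complex ^ 'n::finite) \<Rightarrow> real \<Rightarrow> nat set" where
  "jplus_set k1 k2 M u \<delta> =
     {j \<in> {1..card (energy_values k1 k2 M u)}.
        \<delta> \<le> (1 / real M) * (\<Sum>k\<in>{1..j}. real (card {i\<in>{1..M}. energy k1 k2 (u i) = ebar k1 k2 M u k}))}"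

end

theory Submission
  imports Defs
begin

lemma prod_Basis_vec:
  "(\<Prod>b\<in>(Basis :: ('a::euclidean_space ^ 'n) set). f b) = (\<Prod>i\<in>UNIV. \<Prod>c\<in>Basis. f (axis i c))"
proof -
  have "(\<Prod>b\<in>(Basis :: ('a::euclidean_space ^ 'n) set). f b) = (\<Prod>i\<in>UNIV. prod f (\<Union>u\<in>Basis. {axis i u}))"
    unfolding Basis_vec_def
    by (rule prod.UNION_disjoint) (auto simp: axis_eq_axis)
  also have "\<dots> = (\<Prod>i\<in>UNIV. \<Prod>c\<in>Basis. f (axis i c))"
  proof (rule prod.cong[OF refl])
    fix i :: 'n
    have "(\<Union>u\<in>Basis. {axis i u}) = axis i ` (Basis :: 'a set)" by auto
    moreover have "inj_on (axis i) (Basis :: 'a set)" by (auto intro!: inj_onI simp: axis_eq_axis)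
    ultimately show "prod f (\<Union>u\<in>Basis. {axis i u}) = (\<Prod>c\<in>Basis. f (axis i c))"
      by (simp add: prod.reindex)
  qed
  finally show ?thesis .
qed

lemma measurable_vec_lambda[measurable]:
  "(\<lambda>x. vec_lambda x :: 'a::euclidean_space ^ 'n) \<in> borel_measurable (PiM UNIV (\<lambda>_. (borel :: 'a measure)))"
proof (subst borel_measurable_euclidean_space, intro ballI)
  fix b :: "'a ^ 'n" assume "b \<in> Basis"
  then obtain i c where b: "b = axis i c" "c \<in> Basis" unfolding Basis_vec_def by auto
  have "(\<lambda>x. x i \<bullet> c) \<in> borel_measurable (PiM UNIV (\<lambda>_. (borel :: 'a measure)))"
    by measurable
  then show "(\<lambda>x. vec_lambda x \<bullet> b) \<in> borel_measurable (PiM UNIV (\<lambda>_. (borel :: 'a measure)))"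
    by (simp add: b inner_axis)
qed

lemma lborel_vec:
  "(lborel :: ('a::euclidean_space ^ 'n) measure) = distr (PiM UNIV (\<lambda>_. lborel)) borel (\<lambda>x. vec_lambda x)"
proof (rule lborel_eqI)
  interpret P: product_sigma_finite "\<lambda>_::'n. (lborel :: 'a measure)"
    by standard
  fix l u :: "'a ^ 'n"
  assume le: "\<And>b. b \<in> Basis \<Longrightarrow> l \<bullet> b \<le> u \<bullet> b"
  have meas: "(\<lambda>x. vec_lambda x :: 'a ^ 'n) \<in> PiM UNIV (\<lambda>_. (lborel :: 'a measure)) \<rightarrow>\<^sub>M borel"
    using measurable_vec_lambda by (simp cong: measurable_cong_sets)
  have pre: "(\<lambda>x. vec_lambda x) -` box l u \<inter> space (PiM UNIV (\<lambda>_. (lborel :: 'a measure))) =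
      PiE UNIV (\<lambda>i. box (l $ i) (u $ i))"
    by (auto simp: mem_box Basis_vec_def inner_axis space_PiM PiE_iff)
  have lei: "\<And>i c. c \<in> Basis \<Longrightarrow> l $ i \<bullet> c \<le> u $ i \<bullet> c"
    using le by (metis axis_in_Basis_iff inner_axis)
  have "emeasure (distr (PiM UNIV (\<lambda>_. lborel)) borel (\<lambda>x. vec_lambda x)) (box l u) =
     emeasure (PiM UNIV (\<lambda>_. (lborel :: 'a measure))) (PiE UNIV (\<lambda>i. box (l $ i) (u $ i)))"
    by (subst emeasure_distr[OF meas]) (auto simp: pre)
  also have "\<dots> = (\<Prod>i\<in>UNIV. emeasure lborel (box (l $ i) (u $ i)))"
    by (rule P.emeasure_PiM) auto
  also have "\<dots> = (\<Prod>i\<in>UNIV. ennreal (\<Prod>c\<in>Basis. (u $ i - l $ i) \<bullet> c))"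
    using lei by (simp add: emeasure_lborel_box_eq inner_diff_left)
  also have "\<dots> = ennreal (\<Prod>i\<in>UNIV. \<Prod>c\<in>Basis. (u $ i - l $ i) \<bullet> c)"
    using lei by (subst prod_ennreal) (auto intro!: prod_nonneg simp: inner_diff_left)
  also have "(\<Prod>i\<in>UNIV. \<Prod>c\<in>Basis. (u $ i - l $ i) \<bullet> c) = (\<Prod>b\<in>Basis. (u - l) \<bullet> b)"
    by (simp add: prod_Basis_vec inner_axis)
  finally show "emeasure (distr (PiM UNIV (\<lambda>_. lborel)) borel (\<lambda>x. vec_lambda x)) (box l u) = (\<Prod>b\<in>Basis. (u - l) \<bullet> b)" .
qed simp

lemma exp_as_integral:
  fixes \<tau> S a :: real
  assumes "0 < \<tau>" "a \<le> S"
  shows "ennreal (exp (- a / \<tau>)) = ennreal (exp (- S / \<tau>)) +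
     (\<integral>\<^sup>+t. ennreal (exp (- t / \<tau>) / \<tau>) * indicator {a..S} t \<partial>lborel)"
proof -
  have "(\<integral>\<^sup>+t. ennreal (exp (- t / \<tau>) / \<tau>) * indicator {a..S} t \<partial>lborel)
      = ennreal ((\<lambda>t. - exp (- t / \<tau>)) S - (\<lambda>t. - exp (- t / \<tau>)) a)"
  proof (rule nn_integral_FTC_Icc)
    show "(\<lambda>t. exp (- t / \<tau>) / \<tau>) \<in> borel_measurable borel" by measurable
    fix x assume "x \<in> {a..S}"
    show "((\<lambda>t. - exp (- t / \<tau>)) has_real_derivative exp (- x / \<tau>) / \<tau>) (at x)"
      using assms by (auto intro!: derivative_eq_intros simp: field_simps)
    show "0 \<le> exp (- x / \<tau>) / \<tau>" using assms by simp
  qed (use assms in auto)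
  moreover have "exp (- S / \<tau>) \<le> exp (- a / \<tau>)" using assms by (simp add: divide_right_mono)
  ultimately show ?thesis
    by (simp add: ennreal_plus[symmetric] del: ennreal_plus)
qed

lemma disk_poly_integral:
  fixes \<tau> S :: real
  assumes "0 < \<tau>" "0 \<le> S"
  shows "(\<integral>\<^sup>+t. ennreal (exp (- t / \<tau>) / \<tau> * (pi * t)) * indicator {0..S} t \<partial>lborel)
      = ennreal (pi * \<tau> - pi * (S + \<tau>) * exp (- S / \<tau>))"
proof -
  have "(\<integral>\<^sup>+t. ennreal (exp (- t / \<tau>) / \<tau> * (pi * t)) * indicator {0..S} t \<partial>lborel)
      = ennreal ((\<lambda>t. - pi * (t + \<tau>) * exp (- t / \<tau>)) S - (\<lambda>t. - pi * (t + \<tau>) * exp (- t / \<tau>)) 0)"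
  proof (rule nn_integral_FTC_Icc)
    show "(\<lambda>t. exp (- t / \<tau>) / \<tau> * (pi * t)) \<in> borel_measurable borel" by measurable
    fix x assume "x \<in> {0..S}"
    show "((\<lambda>t. - pi * (t + \<tau>) * exp (- t / \<tau>)) has_real_derivative exp (- x / \<tau>) / \<tau> * (pi * x)) (at x)"
      using assms by (auto intro!: derivative_eq_intros simp: field_simps)
    show "0 \<le> exp (- x / \<tau>) / \<tau> * (pi * x)" using assms \<open>x \<in> {0..S}\<close> by simp
  qed (use assms in auto)
  then show ?thesis by (simp add: algebra_simps)
qed

lemma disk_gauss0:
  fixes \<tau> s :: real
  assumes "0 < \<tau>" "0 \<le> s"
  shows "(\<integral>\<^sup>+z. indicator (cball (0::complex) s) z * ennreal (exp (- (cmod z)\<^sup>2 / \<tau>)) \<partial>lborel)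
      = ennreal (pi * \<tau> * (1 - exp (- s\<^sup>2 / \<tau>)))"
proof -
  interpret P: pair_sigma_finite "lborel :: complex measure" "lborel :: real measure" ..
  define S where "S = s\<^sup>2"
  have S0: "0 \<le> S" by (simp add: S_def)
  define H where "H = (\<lambda>z t. indicator (cball (0::complex) s) z * ennreal (exp (- t / \<tau>) / \<tau>) *
      (if (cmod z)\<^sup>2 \<le> t \<and> t \<le> S then 1 else 0 :: ennreal))"
  have cb[measurable]: "cball (0::complex) s \<in> sets borel" by (simp add: borel_closed)
  have Hb: "case_prod H \<in> borel_measurable (borel \<Otimes>\<^sub>M borel)"
    unfolding H_def by measurable
  have Hm: "case_prod H \<in> borel_measurable (lborel \<Otimes>\<^sub>M lborel)"
    using Hb by (simp cong: measurable_cong_sets add: sets_pair_measure_cong[OF sets_lborel sets_lborel])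
  have pt: "indicator (cball (0::complex) s) z * ennreal (exp (- (cmod z)\<^sup>2 / \<tau>)) =
      indicator (cball (0::complex) s) z * ennreal (exp (- S / \<tau>)) + (\<integral>\<^sup>+t. H z t \<partial>lborel)" for z
  proof (cases "z \<in> cball 0 s")
    case True
    then have "(cmod z)\<^sup>2 \<le> S" unfolding S_def using assms
      by (auto intro!: power_mono)
    then have "ennreal (exp (- (cmod z)\<^sup>2 / \<tau>)) = ennreal (exp (- S / \<tau>)) +
     (\<integral>\<^sup>+t. ennreal (exp (- t / \<tau>) / \<tau>) * indicator {(cmod z)\<^sup>2..S} t \<partial>lborel)"
      using assms by (intro exp_as_integral) auto
    moreover have "(\<lambda>t. H z t) = (\<lambda>t. ennreal (exp (- t / \<tau>) / \<tau>) * indicator {(cmod z)\<^sup>2..S} t)"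
      using True by (auto simp: H_def fun_eq_iff split: split_indicator)
    ultimately show ?thesis using True by simp
  next
    case False
    then show ?thesis by (simp add: H_def)
  qed
  have "(\<integral>\<^sup>+z. indicator (cball (0::complex) s) z * ennreal (exp (- (cmod z)\<^sup>2 / \<tau>)) \<partial>lborel)
     = (\<integral>\<^sup>+z. indicator (cball (0::complex) s) z * ennreal (exp (- S / \<tau>)) \<partial>lborel) +
       (\<integral>\<^sup>+z. (\<integral>\<^sup>+t. H z t \<partial>lborel) \<partial>lborel)"
    unfolding pt
    by (rule nn_integral_add) (use Hm in \<open>auto intro!: lborel.borel_measurable_nn_integral_fst[of "case_prod H", simplified]\<close>)
  also have "(\<integral>\<^sup>+z. indicator (cball (0::complex) s) z * ennreal (exp (- S / \<tau>)) \<partial>lborel)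
      = ennreal (exp (- S / \<tau>)) * ennreal (pi * S)"
    using assms by (simp add: nn_integral_multc emeasure_cball unit_ball_vol_2 S_def mult.commute)
  also have "(\<integral>\<^sup>+z. (\<integral>\<^sup>+t. H z t \<partial>lborel) \<partial>lborel) = (\<integral>\<^sup>+t. (\<integral>\<^sup>+z. H z t \<partial>lborel) \<partial>lborel)"
    using lborel_pair.Fubini'[OF Hm] by simp
  also have "\<dots> = (\<integral>\<^sup>+t. ennreal (exp (- t / \<tau>) / \<tau> * (pi * t)) * indicator {0..S} t \<partial>lborel)"
  proof (rule nn_integral_cong)
    fix t :: real
    show "(\<integral>\<^sup>+z. H z t \<partial>lborel) = ennreal (exp (- t / \<tau>) / \<tau> * (pi * t)) * indicator {0..S} t"
    proof (cases "0 \<le> t \<and> t \<le> S")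
      case True
      have "(\<lambda>z. H z t) = (\<lambda>z. ennreal (exp (- t / \<tau>) / \<tau>) * indicator (cball 0 (sqrt t)) z)"
      proof
        fix z :: complex
        have "z \<in> cball 0 s \<and> (cmod z)\<^sup>2 \<le> t \<longleftrightarrow> z \<in> cball 0 (sqrt t)"
        proof -
          have "(cmod z)\<^sup>2 \<le> t \<longleftrightarrow> cmod z \<le> sqrt t" using True
            by (metis norm_ge_zero real_le_rsqrt real_sqrt_le_iff real_sqrt_pow2_iff power2_eq_square abs_of_nonneg real_sqrt_abs)
          moreover have "sqrt t \<le> s" using True assms unfolding S_def
            by (metis real_sqrt_abs real_sqrt_le_mono abs_of_nonneg)
          ultimately show ?thesis by auto
        qed
        then show "H z t = ennreal (exp (- t / \<tau>) / \<tau>) * indicator (cball 0 (sqrt t)) z"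
          using True by (auto simp: H_def split: split_indicator)
      qed
      then have "(\<integral>\<^sup>+z. H z t \<partial>lborel) = ennreal (exp (- t / \<tau>) / \<tau>) * emeasure lborel (cball (0::complex) (sqrt t))"
        by (simp only:) (rule nn_integral_cmult_indicator, simp)
      also have "emeasure lborel (cball (0::complex) (sqrt t)) = ennreal (pi * t)"
        using True by (simp add: emeasure_cball unit_ball_vol_2)
      finally show ?thesis using True assms
        by (simp add: ennreal_mult'[symmetric])
    next
      case False
      then have "(\<lambda>z. H z t) = (\<lambda>z. 0)"
        by (auto simp: H_def fun_eq_iff split: split_indicator) (smt (verit) norm_ge_zero zero_le_power2)+
      then show ?thesis using False by simp
    qed
  qed
  also have "\<dots> = ennreal (pi * \<tau> - pi * (S + \<tau>) * exp (- S / \<tau>))"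
    by (rule disk_poly_integral[OF assms(1) S0])
  also have "ennreal (exp (- S / \<tau>)) * ennreal (pi * S) + ennreal (pi * \<tau> - pi * (S + \<tau>) * exp (- S / \<tau>))
     = ennreal (pi * \<tau> * (1 - exp (- S / \<tau>)))"
  proof -
    have nn: "0 \<le> pi * \<tau> - pi * (S + \<tau>) * exp (- S / \<tau>)"
    proof -
      have "1 + S / \<tau> \<le> exp (S / \<tau>)" by (rule exp_ge_add_one_self)
      then have "S + \<tau> \<le> \<tau> * exp (S / \<tau>)" using assms by (simp add: field_simps)
      then have "(S + \<tau>) * exp (- S / \<tau>) \<le> \<tau> * exp (S / \<tau>) * exp (- S / \<tau>)"
        by (rule mult_right_mono) simp
      also have "\<dots> = \<tau>" by (simp add: mult.assoc exp_add[symmetric])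
      finally show ?thesis by (simp add: mult.assoc)
    qed
    show ?thesis using nn S0 by (simp add: ennreal_mult'[symmetric] ennreal_plus[symmetric] algebra_simps del: ennreal_plus)
  qed
  finally show ?thesis by (simp add: S_def)
qed


definition gd :: "real \<Rightarrow> complex \<Rightarrow> real" where
  "gd \<sigma> w = 1 / (pi * \<sigma>\<^sup>2) * exp (- (cmod w)\<^sup>2 / \<sigma>\<^sup>2)"

lemma gd_nonneg: "0 \<le> gd \<sigma> w" by (simp add: gd_def)

lemma gd_meas[measurable]: "(\<lambda>w. gd \<sigma> w) \<in> borel_measurable borel"
  unfolding gd_def by measurable

lemma vec_nth_meas[measurable]: "(\<lambda>x::'a::euclidean_space^'n. x $ m) \<in> borel_measurable borel"
  by (intro borel_measurable_continuous_onI continuous_intros)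

lemma disk_gauss:
  fixes \<sigma> s :: real and a :: complex
  assumes "0 < \<sigma>" "0 \<le> s"
  shows "(\<integral>\<^sup>+z. indicator (cball a s) z * ennreal (gd \<sigma> (z - a)) \<partial>lborel) = ennreal (1 - exp (- s\<^sup>2 / \<sigma>\<^sup>2))"
proof -
  have cb[measurable]: "cball a s \<in> sets borel" "cball 0 s \<in> sets borel" by (simp_all add: borel_closed)
  have "(\<integral>\<^sup>+z. indicator (cball a s) z * ennreal (gd \<sigma> (z - a)) \<partial>lborel)
      = (\<integral>\<^sup>+z. indicator (cball a s) z * ennreal (gd \<sigma> (z - a)) \<partial>(distr lborel borel ((+) a)))"
    by (simp add: lborel_distr_plus)
  also have "\<dots> = (\<integral>\<^sup>+z. indicator (cball a s) (a + z) * ennreal (gd \<sigma> (a + z - a)) \<partial>lborel)"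
    by (subst nn_integral_distr) auto
  also have "\<dots> = (\<integral>\<^sup>+z. ennreal (1 / (pi * \<sigma>\<^sup>2)) * (indicator (cball (0::complex) s) z * ennreal (exp (- (cmod z)\<^sup>2 / \<sigma>\<^sup>2))) \<partial>lborel)"
    by (intro nn_integral_cong) (auto simp: gd_def ennreal_mult[symmetric] dist_norm split: split_indicator)
  also have "\<dots> = ennreal (1 / (pi * \<sigma>\<^sup>2)) * ennreal (pi * \<sigma>\<^sup>2 * (1 - exp (- s\<^sup>2 / \<sigma>\<^sup>2)))"
    using assms disk_gauss0[of "\<sigma>\<^sup>2" s] by (subst nn_integral_cmult) auto
  also have "\<dots> = ennreal (1 - exp (- s\<^sup>2 / \<sigma>\<^sup>2))"
    using assms by (simp add: ennreal_mult'[symmetric])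
  finally show ?thesis .
qed

lemma box_gauss:
  fixes \<sigma> :: real and a :: "complex ^ 'n" and \<rho> :: "'n \<Rightarrow> real"
  assumes "0 < \<sigma>" "\<And>m. 0 \<le> \<rho> m"
  shows "(\<integral>\<^sup>+y. indicator {y. \<forall>m. y $ m \<in> cball (a $ m) (\<rho> m)} y * ennreal (\<Prod>m\<in>UNIV. gd \<sigma> (y $ m - a $ m)) \<partial>lborel)
     = (\<Prod>m\<in>UNIV. ennreal (1 - exp (- (\<rho> m)\<^sup>2 / \<sigma>\<^sup>2)))"
proof -
  interpret P: product_sigma_finite "\<lambda>_::'n. (lborel :: complex measure)"
    by standard
  have meas: "(\<lambda>x. vec_lambda x :: complex ^ 'n) \<in> PiM UNIV (\<lambda>_. (lborel :: complex measure)) \<rightarrow>\<^sub>M borel"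
    using measurable_vec_lambda by (simp cong: measurable_cong_sets)
  have cb[measurable]: "\<And>m. cball (a $ m) (\<rho> m) \<in> sets borel" by (simp add: borel_closed)
  have "(\<integral>\<^sup>+y. indicator {y. \<forall>m. y $ m \<in> cball (a $ m) (\<rho> m)} y * ennreal (\<Prod>m\<in>UNIV. gd \<sigma> (y $ m - a $ m)) \<partial>lborel)
     = (\<integral>\<^sup>+y. indicator {y. \<forall>m. y $ m \<in> cball (a $ m) (\<rho> m)} y * ennreal (\<Prod>m\<in>UNIV. gd \<sigma> (y $ m - a $ m))
         \<partial>(distr (PiM UNIV (\<lambda>_. lborel)) borel (\<lambda>x. vec_lambda x)))"
    by (simp only: lborel_vec[symmetric])
  also have "\<dots> = (\<integral>\<^sup>+x. indicator {y. \<forall>m. y $ m \<in> cball (a $ m) (\<rho> m)} (vec_lambda x :: complex ^ 'n) *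
        ennreal (\<Prod>m\<in>UNIV. gd \<sigma> (vec_lambda x $ m - a $ m)) \<partial>(PiM UNIV (\<lambda>_. lborel)))"
    by (subst nn_integral_distr[OF meas]) auto
  also have "\<dots> = (\<integral>\<^sup>+x. (\<Prod>m\<in>UNIV. (\<lambda>m z. indicator (cball (a $ m) (\<rho> m)) z * ennreal (gd \<sigma> (z - a $ m))) m (x m))
        \<partial>(PiM UNIV (\<lambda>_. lborel)))"
  proof (rule nn_integral_cong)
    fix x :: "'n \<Rightarrow> complex"
    show "indicator {y. \<forall>m. y $ m \<in> cball (a $ m) (\<rho> m)} (vec_lambda x :: complex ^ 'n) *
        ennreal (\<Prod>m\<in>UNIV. gd \<sigma> (vec_lambda x $ m - a $ m)) =
        (\<Prod>m\<in>UNIV. (\<lambda>m z. indicator (cball (a $ m) (\<rho> m)) z * ennreal (gd \<sigma> (z - a $ m))) m (x m))"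
      by (simp add: prod.distrib prod_ennreal gd_nonneg indicator_def prod.neutral)
  qed
  also have "\<dots> = (\<Prod>m\<in>UNIV. (\<integral>\<^sup>+z. indicator (cball (a $ m) (\<rho> m)) z * ennreal (gd \<sigma> (z - a $ m)) \<partial>lborel))"
    by (rule P.product_nn_integral_prod) auto
  also have "\<dots> = (\<Prod>m\<in>UNIV. ennreal (1 - exp (- (\<rho> m)\<^sup>2 / \<sigma>\<^sup>2)))"
    using assms by (simp add: disk_gauss)
  finally show ?thesis .
qed


lemma A_strict_dec:
  fixes c c' C :: nat and A :: "nat \<Rightarrow> real"
  assumes dec: "\<forall>c\<in>{1..<C}. A (c + 1) < A c" and c1: "1 \<le> c"
  shows "c < c' \<Longrightarrow> c' \<le> C \<Longrightarrow> A c' < A c"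
proof (induction c')
  case 0
  then show ?case by simp
next
  case (Suc x)
  have xC: "x \<in> {1..<C}" using Suc.prems c1 by auto
  then have step: "A (x + 1) < A x" using dec by blast
  show ?case
  proof (cases "x = c")
    case True
    then show ?thesis using step by simp
  next
    case False
    then have "c < x" using Suc.prems by simp
    then have "A x < A c" using Suc.IH Suc.prems by simp
    then show ?thesis using step by simp
  qed
qed

lemma cmod_xpt:
  assumes "0 \<le> A c"
  shows "cmod (xpt A L \<alpha> c l) = A c"
  using assms by (simp add: xpt_def norm_mult)

lemma layer_unique:
  assumes fam: "in_family C A L \<alpha> p r M u D"
    and c: "c \<in> {1..C}" and c': "c' \<in> {1..C}" and e: "xpt A L \<alpha> c l = xpt A L \<alpha> c' l'"
  shows "c = c'"
proof -
  have dec: "\<forall>c\<in>{1..<C}. A (c + 1) < A c" and pos: "\<forall>c\<in>{1..C}. 0 < A c"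
    using fam unfolding in_family_def by blast+
  have "cmod (xpt A L \<alpha> c l) = A c" using pos c by (intro cmod_xpt) (simp add: less_imp_le)
  moreover have "cmod (xpt A L \<alpha> c' l') = A c'" using pos c' by (intro cmod_xpt) (simp add: less_imp_le)
  ultimately have eqA: "A c = A c'" using e by simp
  show ?thesis
  proof (rule linorder_cases[of c c'])
    assume "c < c'"
    then have "A c' < A c" using A_strict_dec[OF dec, of c c'] c c' by simp
    then show ?thesis using eqA by simp
  next
    assume "c' < c"
    then have "A c < A c'" using A_strict_dec[OF dec, of c' c] c c' by simp
    then show ?thesis using eqA by simp
  qed
qed

lemma codeword_integral:
  fixes u :: "nat \<Rightarrow> complex ^ 'n::finite" and \<sigma> :: real
  assumes \<sigma>: "0 < \<sigma>" and fam: "in_family C A L \<alpha> p r M u D" and i: "i \<in> {1..M}"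
  shows "(\<Prod>c\<in>{1..C}. (1 - exp (- (r c)\<^sup>2 / \<sigma>\<^sup>2)) powr
                   (real CARD('n) * (\<Sum>l<L c. type_of_word (u i) (xpt A L \<alpha> c l))))
     \<le> set_lebesgue_integral lborel (D i) (\<lambda>y. awgn_density \<sigma> y (u i))"
proof -
  define v where "v = u i"
  have mem: "\<exists>c. c \<in> {1..C} \<and> (\<exists>l<L c. v $ m = xpt A L \<alpha> c l)" for m
    using fam i unfolding in_family_def constellation_def ulayer_def v_def by blast
  define cl where "cl = (\<lambda>m. SOME c. c \<in> {1..C} \<and> (\<exists>l<L c. v $ m = xpt A L \<alpha> c l))"
  have clp: "cl m \<in> {1..C} \<and> (\<exists>l<L (cl m). v $ m = xpt A L \<alpha> (cl m) l)" for m
    unfolding cl_def by (rule someI_ex[OF mem])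
  have rpos: "\<And>c. c \<in> {1..C} \<Longrightarrow> 0 < r c" using fam by (auto simp: in_family_def)
  define \<rho> where "\<rho> = (\<lambda>m. r (cl m))"
  have \<rho>0: "0 \<le> \<rho> m" for m using rpos clp[of m] by (auto simp: \<rho>_def less_imp_le)
  have Deq: "D i = {y. \<forall>m. y $ m \<in> cball (v $ m) (\<rho> m)}"
  proof -
    have Di: "D i = decoding_set C A L \<alpha> r v" using fam i by (simp add: in_family_def v_def)
    show ?thesis unfolding Di decoding_set_def
    proof (intro Collect_cong iffI allI ballI impI)
      fix y :: "complex ^ 'n" and m
      assume h: "\<forall>m. \<forall>c\<in>{1..C}. \<forall>l<L c. v $ m = xpt A L \<alpha> c l \<longrightarrow> cmod (y $ m - xpt A L \<alpha> c l) \<le> r c"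
      obtain l where "l < L (cl m)" "v $ m = xpt A L \<alpha> (cl m) l" using clp[of m] by blast
      then show "y $ m \<in> cball (v $ m) (\<rho> m)"
        using h clp[of m] by (auto simp: \<rho>_def dist_norm norm_minus_commute)
    next
      fix y :: "complex ^ 'n" and m c l
      assume h: "\<forall>m. y $ m \<in> cball (v $ m) (\<rho> m)" and c: "c \<in> {1..C}" and l: "l < L c"
        and e: "v $ m = xpt A L \<alpha> c l"
      obtain l0 where "v $ m = xpt A L \<alpha> (cl m) l0" using clp[of m] by blast
      then have "cl m = c" using layer_unique[OF fam, of "cl m" c l0 l] clp[of m] c e by simp
      then show "cmod (y $ m - xpt A L \<alpha> c l) \<le> r c"
        using h[rule_format, of m] e by (auto simp: \<rho>_def dist_norm norm_minus_commute)
    qed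
  qed
  have dens: "awgn_density \<sigma> y v = (\<Prod>m\<in>UNIV. gd \<sigma> (y $ m - v $ m))" for y
    by (simp add: awgn_density_def gd_def)
  have closedD: "closed {y :: complex ^ 'n. \<forall>m. y $ m \<in> cball (v $ m) (\<rho> m)}"
    unfolding mem_cball by (intro closed_Collect_all closed_Collect_le continuous_intros)
  have Dmeas[measurable]: "{y :: complex ^ 'n. \<forall>m. y $ m \<in> cball (v $ m) (\<rho> m)} \<in> sets borel"
    using closedD by (rule borel_closed)
  have "set_lebesgue_integral lborel (D i) (\<lambda>y. awgn_density \<sigma> y (u i))
      = integral\<^sup>L lborel (\<lambda>y. indicator {y. \<forall>m. y $ m \<in> cball (v $ m) (\<rho> m)} y * (\<Prod>m\<in>UNIV. gd \<sigma> (y $ m - v $ m)))"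
    unfolding set_lebesgue_integral_def Deq by (simp add: dens v_def[symmetric])
  also have "\<dots> = enn2real (\<integral>\<^sup>+y. ennreal (indicator {y. \<forall>m. y $ m \<in> cball (v $ m) (\<rho> m)} y * (\<Prod>m\<in>UNIV. gd \<sigma> (y $ m - v $ m))) \<partial>lborel)"
    by (rule integral_eq_nn_integral) (auto intro!: AE_I2 mult_nonneg_nonneg prod_nonneg simp: gd_nonneg)
  also have "(\<integral>\<^sup>+y. ennreal (indicator {y. \<forall>m. y $ m \<in> cball (v $ m) (\<rho> m)} y * (\<Prod>m\<in>UNIV. gd \<sigma> (y $ m - v $ m))) \<partial>lborel)
      = (\<integral>\<^sup>+y. indicator {y. \<forall>m. y $ m \<in> cball (v $ m) (\<rho> m)} y * ennreal (\<Prod>m\<in>UNIV. gd \<sigma> (y $ m - v $ m)) \<partial>lborel)"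
    by (intro nn_integral_cong) (simp split: split_indicator)
  also have "\<dots> = (\<Prod>m\<in>UNIV. ennreal (1 - exp (- (\<rho> m)\<^sup>2 / \<sigma>\<^sup>2)))"
    by (rule box_gauss[OF \<sigma> \<rho>0])
  also have "\<dots> = ennreal (\<Prod>m\<in>UNIV. (1 - exp (- (\<rho> m)\<^sup>2 / \<sigma>\<^sup>2)))"
    by (rule prod_ennreal) simp
  finally have I: "set_lebesgue_integral lborel (D i) (\<lambda>y. awgn_density \<sigma> y (u i)) = (\<Prod>m\<in>UNIV. (1 - exp (- (\<rho> m)\<^sup>2 / \<sigma>\<^sup>2)))"
    by (simp add: prod_nonneg)
  define b where "b = (\<lambda>c. 1 - exp (- (r c)\<^sup>2 / \<sigma>\<^sup>2))"
  have b01: "0 < b c" "b c \<le> 1" if "c \<in> {1..C}" for c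
    using rpos[OF that] \<sigma> by (auto simp: b_def)
  define N where "N = (\<lambda>c. \<Sum>l<L c. card {m. v $ m = xpt A L \<alpha> c l})"
  define K where "K = (\<lambda>c. card {m. cl m = c})"
  have expo: "real CARD('n) * (\<Sum>l<L c. type_of_word (u i) (xpt A L \<alpha> c l)) = real (N c)" for c
    by (simp add: N_def type_of_word_def v_def[symmetric] sum_divide_distrib[symmetric])
  have KN: "K c \<le> N c" for c
  proof -
    have "{m. cl m = c} \<subseteq> (\<Union>l<L c. {m. v $ m = xpt A L \<alpha> c l})" using clp by blast
    then have "K c \<le> card (\<Union>l<L c. {m. v $ m = xpt A L \<alpha> c l})"
      unfolding K_def by (intro card_mono) auto
    also have "\<dots> \<le> N c" unfolding N_def by (rule card_UN_le) simp
    finally show ?thesis .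
  qed
  have "(\<Prod>c\<in>{1..C}. b c powr real (N c)) = (\<Prod>c\<in>{1..C}. b c ^ N c)"
    using b01 by (intro prod.cong refl powr_realpow) auto
  also have "\<dots> \<le> (\<Prod>c\<in>{1..C}. b c ^ K c)"
    using b01 KN by (intro prod_mono conjI power_decreasing) (auto simp: less_imp_le)
  also have "\<dots> = (\<Prod>c\<in>{1..C}. \<Prod>m\<in>{m. m \<in> UNIV \<and> cl m = c}. b (cl m))"
    by (intro prod.cong refl) (simp add: K_def)
  also have "\<dots> = (\<Prod>m\<in>UNIV. b (cl m))"
    by (rule prod.group) (use clp in auto)
  also have "\<dots> = (\<Prod>m\<in>UNIV. (1 - exp (- (\<rho> m)\<^sup>2 / \<sigma>\<^sup>2)))"
    by (simp add: b_def \<rho>_def)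
  finally show ?thesis unfolding I expo b_def .
qed



lemma energy_part:
  fixes M :: nat and u :: "nat \<Rightarrow> complex ^ 'n::finite" and k1 k2 B \<delta> :: real
  assumes M: "1 \<le> M" and d0: "0 \<le> \<delta>"
    and h_B: "\<exists>j\<in>jplus_set k1 k2 M u \<delta>. (\<forall>j'\<in>jplus_set k1 k2 M u \<delta>. j \<le> j') \<and> B \<le> ebar k1 k2 M u j"
  shows "energy_outage k1 k2 M u B \<le> \<delta>"
proof -
  define E where "E = energy_values k1 k2 M u"
  define xs where "xs = sorted_list_of_set E"
  define e where "e = (\<lambda>i. energy k1 k2 (u i))"
  have finE: "finite E" by (simp add: E_def energy_values_def)
  have setxs: "set xs = E" and sxs: "sorted_wrt (<) xs" and dxs: "distinct xs" and lxs: "length xs = card E"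
    using finE by (simp_all add: xs_def)
  have eE: "i \<in> {1..M} \<Longrightarrow> e i \<in> E" for i by (auto simp: E_def energy_values_def e_def)
  obtain j where j: "j \<in> jplus_set k1 k2 M u \<delta>" and jmin: "\<And>j'. j' \<in> jplus_set k1 k2 M u \<delta> \<Longrightarrow> j \<le> j'"
    and Bj: "B \<le> ebar k1 k2 M u j" using h_B by blast
  have j1: "1 \<le> j" and jc: "j \<le> card E" using j by (auto simp: jplus_set_def E_def)
  have eb: "ebar k1 k2 M u k = xs ! (k - 1)" for k by (simp add: ebar_def xs_def E_def)
  define cnt where "cnt = (\<lambda>k. card {i\<in>{1..M}. e i = xs ! (k - 1)})"
  have key: "card {i\<in>{1..M}. e i < xs ! (j - 1)} = (\<Sum>k\<in>{1..j-1}. cnt k)"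
  proof -
    have "{i\<in>{1..M}. e i < xs ! (j - 1)} = (\<Union>k\<in>{1..j-1}. {i\<in>{1..M}. e i = xs ! (k - 1)})"
    proof (intro equalityI subsetI)
      fix i assume "i \<in> {i\<in>{1..M}. e i < xs ! (j - 1)}"
      then have i: "i \<in> {1..M}" "e i < xs ! (j - 1)" by auto
      then obtain p where p: "p < length xs" "e i = xs ! p" using eE setxs by (metis in_set_conv_nth)
      have "p < j - 1"
      proof (rule ccontr)
        assume "\<not> p < j - 1"
        then have "j - 1 \<le> p" by simp
        then have "xs ! (j - 1) \<le> xs ! p"
          using p(1) by (intro sorted_nth_mono) (auto simp: xs_def)
        then show False using i p by simp
      qed
      then show "i \<in> (\<Union>k\<in>{1..j-1}. {i\<in>{1..M}. e i = xs ! (k - 1)})"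
        using i p by (intro UN_I[of "p+1"]) auto
    next
      fix i assume "i \<in> (\<Union>k\<in>{1..j-1}. {i\<in>{1..M}. e i = xs ! (k - 1)})"
      then obtain k where k: "k \<in> {1..j-1}" "i \<in> {1..M}" "e i = xs ! (k - 1)" by auto
      have "xs ! (k - 1) < xs ! (j - 1)"
        using k(1) j1 jc lxs sorted_wrt_nth_less[OF sxs, of "k - 1" "j - 1"] by auto
      then show "i \<in> {i\<in>{1..M}. e i < xs ! (j - 1)}" using k by auto
    qed
    also have "card \<dots> = (\<Sum>k\<in>{1..j-1}. cnt k)" unfolding cnt_def
    proof (rule card_UN_disjoint)
      show "\<forall>k\<in>{1..j - 1}. \<forall>k'\<in>{1..j - 1}. k \<noteq> k' \<longrightarrow>
          {i \<in> {1..M}. e i = xs ! (k - 1)} \<inter> {i \<in> {1..M}. e i = xs ! (k' - 1)} = {}"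
      proof (intro ballI impI)
        fix k k' assume kk: "k \<in> {1..j-1}" "k' \<in> {1..j-1}" "k \<noteq> k'"
        then have "xs ! (k - 1) \<noteq> xs ! (k' - 1)"
          using dxs lxs jc j1 by (subst nth_eq_iff_index_eq) auto
        then show "{i \<in> {1..M}. e i = xs ! (k - 1)} \<inter> {i \<in> {1..M}. e i = xs ! (k' - 1)} = {}" by auto
      qed
    qed auto
    finally show ?thesis .
  qed
  have "energy_outage k1 k2 M u B \<le> (1 / real M) * real (card {i\<in>{1..M}. e i < xs ! (j - 1)})"
    unfolding energy_outage_def
  proof (intro mult_left_mono of_nat_mono card_mono)
    show "{i \<in> {1..M}. energy k1 k2 (u i) < B} \<subseteq> {i \<in> {1..M}. e i < xs ! (j - 1)}"
      using Bj by (auto simp: e_def eb)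
  qed auto
  also have "\<dots> = (1 / real M) * (\<Sum>k\<in>{1..j-1}. real (cnt k))" by (simp only: key of_nat_sum)
  also have "\<dots> \<le> \<delta>"
  proof (cases "j = 1")
    case True then show ?thesis using d0 by simp
  next
    case False
    then have "j - 1 \<notin> jplus_set k1 k2 M u \<delta>" using jmin j1 by fastforce
    moreover have "j - 1 \<in> {1..card (energy_values k1 k2 M u)}" using False j1 jc by (auto simp: E_def)
    ultimately show ?thesis
      by (auto simp: jplus_set_def cnt_def e_def eb)
  qed
  finally show ?thesis .
qed



theorem theorem3:
  fixes C M :: nat and A \<alpha> p r :: "nat \<Rightarrow> real" and L :: "nat \<Rightarrow> nat"
    and u :: "nat \<Rightarrow> complex ^ 'n::finite" and D :: "nat \<Rightarrow> (complex ^ 'n) set"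
    and \<sigma> k1 k2 \<epsilon> B \<delta> :: real
  assumes "0 < \<sigma>" and "0 < k1" and "0 < k2" and "1 \<le> M"
    and fam: "in_family C A L \<alpha> p r M u D"
    and code: "is_code (constellation C A L \<alpha>) M u D"
    and h_eps: "\<epsilon> \<ge> 1 - (1 / real M) * (\<Sum>i\<in>{1..M}. \<Prod>c\<in>{1..C}.
                 (1 - exp (- (r c)\<^sup>2 / \<sigma>\<^sup>2)) powr
                   (real CARD('n) * (\<Sum>l<L c. type_of_word (u i) (xpt A L \<alpha> c l))))"
    and h_rate: "code_rate TYPE('n) M \<le>
                 log 2 (real_of_int (\<Sum>c\<in>{1..C}. \<lfloor>pi / (2 * arcsin (r c / (2 * A c)))\<rfloor>))"
    and h_delta: "\<delta> \<ge> (1 / real M) * (\<Sum>i\<in>{1..M}.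
                 (if (\<Sum>c\<in>{1..C}. \<Sum>l<L c. type_of_word (u i) (xpt A L \<alpha> c l) * (k1 * (A c)\<^sup>2 + k2 * (A c) ^ 4))
                      < B / real CARD('n) then 1 else 0))"
    and h_B: "\<exists>j\<in>jplus_set k1 k2 M u \<delta>. (\<forall>j'\<in>jplus_set k1 k2 M u \<delta>. j \<le> j') \<and> B \<le> ebar k1 k2 M u j"
  shows "is_code_eBd \<sigma> k1 k2 (constellation C A L \<alpha>) M u D \<epsilon> B \<delta>"
proof -
  have d0: "0 \<le> \<delta>"
    by (rule order.trans[OF _ h_delta]) (intro mult_nonneg_nonneg sum_nonneg; simp)
  have I: "\<And>i. i \<in> {1..M} \<Longrightarrow> (\<Prod>c\<in>{1..C}. (1 - exp (- (r c)\<^sup>2 / \<sigma>\<^sup>2)) powr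
                   (real CARD('n) * (\<Sum>l<L c. type_of_word (u i) (xpt A L \<alpha> c l))))
     \<le> set_lebesgue_integral lborel (D i) (\<lambda>y. awgn_density \<sigma> y (u i))"
    by (rule codeword_integral[OF assms(1) fam])
  have "avg_error \<sigma> M u D = 1 - (1 / real M) * (\<Sum>i\<in>{1..M}. set_lebesgue_integral lborel (D i) (\<lambda>y. awgn_density \<sigma> y (u i)))"
  proof -
    define S where "S = (\<Sum>i\<in>{1..M}. set_lebesgue_integral lborel (D i) (\<lambda>y. awgn_density \<sigma> y (u i)))"
    have "avg_error \<sigma> M u D = (1 / real M) * (real M - S)"
      unfolding avg_error_def S_def by (simp only: sum_subtractf sum_constant card_atLeastAtMost diff_Suc_1 mult_1_right)
    also have "\<dots> = 1 - (1 / real M) * S" using assms(4) by (simp add: field_simps)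
    finally show ?thesis by (simp only: S_def)
  qed
  also have "\<dots> \<le> 1 - (1 / real M) * (\<Sum>i\<in>{1..M}. \<Prod>c\<in>{1..C}.
                 (1 - exp (- (r c)\<^sup>2 / \<sigma>\<^sup>2)) powr
                   (real CARD('n) * (\<Sum>l<L c. type_of_word (u i) (xpt A L \<alpha> c l))))"
    by (intro diff_left_mono mult_left_mono sum_mono I) simp_all
  also have "\<dots> \<le> \<epsilon>" by (rule h_eps)
  finally have err: "avg_error \<sigma> M u D \<le> \<epsilon>" .
  have en: "energy_outage k1 k2 M u B \<le> \<delta>"
    by (rule energy_part[OF assms(4) d0 h_B])
  show ?thesis unfolding is_code_eBd_def using code err en by simp
qed


end
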